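(* Define $U_0=\{x\mapsto ax+b : a\in\mathbb{R}_+,\ b\in\mathbb{R}\}$, $U_{n+1}=\{x\mapsto a\,\mathrm{LReLU}_\beta(f(x))+b : a,\beta\in\mathbb{R}_+,\ b\in\mathbb{R},\ f\in U_n\}$ for $n\ge 0$, and $U=\bigcup_{n\ge0}U_n$ (functions $\mathbb{R}\to\mathbb{R}$). Then for every continuous non-decreasing function $\sigma:\mathbb{R}\to\mathbb{R}$, every compact $K\subset\mathbb{R}$ and every $\epsilon>0$, there exists $g\in U$ with $\sup_{x\in K}|\sigma(x)-g(x)|<\epsilon$.
   Context: $\mathbb{R}_+$ denotes the positive reals. For $\beta\in\mathbb{R}$, $\mathrm{LReLU}_\beta(x)=x$ if $x\ge 0$ and $\beta x$ if $x<0$. *)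

theory Defs
  imports "HOL-Analysis.Analysis"
begin

definition LReLU :: "real \<Rightarrow> real \<Rightarrow> real" where
  "LReLU \<beta> x = (if x \<ge> 0 then x else \<beta> * x)"

fun U_n :: "nat \<Rightarrow> (real \<Rightarrow> real) set" where
  "U_n 0 = {(\<lambda>x. a * x + b) | a b. a > 0}"
| "U_n (Suc n) = {(\<lambda>x. a * LReLU \<beta> (f x) + b) | a \<beta> b f. a > 0 \<and> \<beta> > 0 \<and> f \<in> U_n n}"

definition U :: "(real \<Rightarrow> real) set" where
  "U = (\<Union>n. U_n n)"

end

theory Submission
  imports Defs
begin

lemma LReLU_less: "\<beta> > 0 \<Longrightarrow> x < y \<Longrightarrow> LReLU \<beta> x < LReLU \<beta> y"
  unfolding LReLU_def by (auto intro: mult_strict_left_mono) (smt (verit) mult_pos_neg)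

lemma U_n_smono: "f \<in> U_n n \<Longrightarrow> x < y \<Longrightarrow> f x < f y"
proof (induction n arbitrary: f x y)
  case 0 then show ?case by auto
next
  case (Suc n)
  then obtain a \<beta> b g where f: "f = (\<lambda>x. a * LReLU \<beta> (g x) + b)" "a > 0" "\<beta> > 0" "g \<in> U_n n"
    by auto
  have "g x < g y" using Suc f by blast
  then have "LReLU \<beta> (g x) < LReLU \<beta> (g y)" using LReLU_less f by blast
  then show ?case using f by simp
qed

lemma chain_mono:
  fixes xs :: "nat \<Rightarrow> real"
  assumes "\<forall>i<m. xs i < xs (Suc i)"
  shows "i \<le> j \<Longrightarrow> j \<le> m \<Longrightarrow> xs i \<le> xs j"
proof (induction j)
  case 0 then show ?case by simp
next
  case (Suc j)
  show ?case
  proof (cases "i = Suc j")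
    case True then show ?thesis by simp
  next
    case False
    then have ij: "i \<le> j" using Suc.prems(1) by simp
    have jm: "j < m" using Suc.prems(2) by simp
    have "xs i \<le> xs j" using Suc.IH ij jm by simp
    also have "xs j < xs (Suc j)" using assms jm by simp
    finally show ?thesis by simp
  qed
qed

lemma interp:
  "\<And>xs ys. (\<forall>i<m. (xs::nat\<Rightarrow>real) i < xs (Suc i)) \<Longrightarrow> (\<forall>i<m. (ys::nat\<Rightarrow>real) i < ys (Suc i))
    \<Longrightarrow> \<exists>n. \<exists>g\<in>U_n n. \<forall>i\<le>m. g (xs i) = ys i"
proof (induction m)
  case 0
  have "(\<lambda>x. 1 * x + (ys 0 - xs 0)) \<in> U_n 0" unfolding U_n.simps by (intro CollectI exI[of _ 1] exI[of _ "ys 0 - xs 0"]) simp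
  then show ?case by (intro exI[of _ 0] bexI[of _ "(\<lambda>x. 1 * x + (ys 0 - xs 0))"]) auto
next
  case (Suc m)
  note P1 = Suc.prems(1)
  have "\<forall>i<m. xs (Suc i) < xs (Suc (Suc i))" "\<forall>i<m. ys (Suc i) < ys (Suc (Suc i))"
    using Suc.prems by auto
  from Suc.IH[OF this] obtain n f where f: "f \<in> U_n n" "\<forall>i\<le>m. f (xs (Suc i)) = ys (Suc i)"
    by blast
  define c where "c = ys 1"
  have fc: "f (xs 1) = c" using f c_def by auto
  have x01: "xs 0 < xs 1" using Suc.prems by auto
  have y01: "ys 0 < c" using Suc.prems c_def by auto
  have f0: "f (xs 0) < c" using U_n_smono[OF f(1) x01] fc by simp
  define \<beta> where "\<beta> = (c - ys 0) / (c - f (xs 0))"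
  have b0: "\<beta> > 0" using y01 f0 \<beta>_def by simp
  define h where "h = (\<lambda>x. 1 * LReLU \<beta> ((\<lambda>x. f x - c) x) + c)"
  have fs: "(\<lambda>x. f x - c) \<in> U_n n"
  proof (cases n)
    case 0 with f(1) obtain a b where "f = (\<lambda>x. a * x + b)" "a > 0" by auto
    then show ?thesis unfolding 0 U_n.simps by (intro CollectI exI[of _ a] exI[of _ "b - c"]) auto
  next
    case (Suc k) with f(1) obtain a \<beta>' b g where "f = (\<lambda>x. a * LReLU \<beta>' (g x) + b)" "a > 0" "\<beta>' > 0" "g \<in> U_n k"
      by auto
    then show ?thesis unfolding Suc U_n.simps by (intro CollectI exI[of _ a] exI[of _ \<beta>'] exI[of _ "b - c"] exI[of _ g]) auto
  qed
  have hU: "h \<in> U_n (Suc n)" unfolding h_def U_n.simps using fs b0 by (intro CollectI exI[of _ 1] exI[of _ \<beta>] exI[of _ c] exI[of _ "\<lambda>x. f x - c"]) simp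
  have "\<forall>i\<le>Suc m. h (xs i) = ys i"
  proof (intro allI impI)
    fix i assume i: "i \<le> Suc m"
    show "h (xs i) = ys i"
    proof (cases i)
      case 0
      have "h (xs 0) = \<beta> * (f (xs 0) - c) + c" using f0 unfolding h_def LReLU_def by simp
      also have "\<dots> = ys 0" using f0 unfolding \<beta>_def by (simp add: field_simps)
      finally show ?thesis using 0 by simp
    next
      case (Suc j)
      have "1 \<le> i" using Suc by simp
      then have "xs 1 \<le> xs i" using chain_mono[OF P1, of 1 i] i by blast
      then have "f (xs 1) \<le> f (xs i)" using U_n_smono[OF f(1), of "xs 1" "xs i"] by (cases "xs 1 = xs i") auto
      then have "f (xs i) \<ge> c" using fc by simp
      then have "h (xs i) = f (xs i)" unfolding h_def LReLU_def by simp
      then show ?thesis using f(2) Suc i by auto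
    qed
  qed
  then show ?case using hU by blast
qed

theorem mainTheorem4:
  fixes \<sigma> :: "real \<Rightarrow> real" and K :: "real set" and \<epsilon> :: real
  assumes "continuous_on UNIV \<sigma>" and "mono \<sigma>"
    and "compact K" and "\<epsilon> > 0"
  shows "\<exists>g\<in>U. (\<forall>x\<in>K. \<bar>\<sigma> x - g x\<bar> < \<epsilon>) \<and>
           (K \<noteq> {} \<longrightarrow> (SUP x\<in>K. \<bar>\<sigma> x - g x\<bar>) < \<epsilon>)"
proof -
  obtain a where a: "\<forall>x\<in>K. \<bar>x\<bar> \<le> a"
    using compact_imp_bounded[OF assms(3)] bounded_real by blast
  define l where "l = - \<bar>a\<bar> - 1"
  define r where "r = \<bar>a\<bar> + 1"
  have Klr: "\<forall>x\<in>K. l \<le> x \<and> x \<le> r"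
  proof
    fix x assume "x \<in> K"
    then have "\<bar>x\<bar> \<le> a" using a by blast
    then have "-a \<le> x" "x \<le> a" by (simp_all add: abs_le_iff)
    moreover have "a \<le> \<bar>a\<bar>" by simp
    ultimately show "l \<le> x \<and> x \<le> r" unfolding l_def r_def by linarith
  qed
  have lr: "l < r" using l_def r_def by simp
  have "uniformly_continuous_on {l..r} \<sigma>"
    by (rule compact_uniformly_continuous) (auto intro: continuous_on_subset[OF assms(1)])
  moreover have "\<epsilon>/4 > 0" using assms(4) by simp
  ultimately obtain d where d: "d > 0" "\<forall>x\<in>{l..r}. \<forall>x'\<in>{l..r}. dist x' x < d \<longrightarrow> dist (\<sigma> x') (\<sigma> x) < \<epsilon>/4"
    unfolding uniformly_continuous_on_def by blast
  obtain n0 :: nat where n0: "(r - l) / d < n0" using reals_Archimedean2 by blast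
  define N where "N = Suc n0"
  have Npos: "real N > 0" using N_def by simp
  define h where "h = (r - l) / N"
  have hpos: "h > 0" using lr Npos h_def by simp
  have hd: "h < d"
  proof -
    have "r - l < d * n0" using n0 d(1) by (simp add: field_simps)
    also have "\<dots> \<le> d * N" using d(1) N_def by simp
    finally show ?thesis unfolding h_def using Npos by (simp add: field_simps)
  qed
  define xs where "xs = (\<lambda>i::nat. l + real i * h)"
  define \<delta> where "\<delta> = \<epsilon> / (4 * N)"
  have \<delta>pos: "\<delta> > 0" using \<delta>_def Npos assms(4) by simp
  define ys where "ys = (\<lambda>i::nat. \<sigma> (xs i) + \<delta> * real i)"
  have xsinc: "\<forall>i<N. xs i < xs (Suc i)" using hpos xs_def by (simp add: algebra_simps)
  have ysinc: "\<forall>i<N. ys i < ys (Suc i)"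
  proof (intro allI impI)
    fix i assume "i < N"
    have "\<sigma> (xs i) \<le> \<sigma> (xs (Suc i))" using assms(2) xsinc \<open>i < N\<close> by (simp add: mono_def less_imp_le)
    then show "ys i < ys (Suc i)" using \<delta>pos ys_def by (simp add: algebra_simps)
  qed
  obtain m g where g: "g \<in> U_n m" "\<forall>i\<le>N. g (xs i) = ys i" using interp[OF xsinc ysinc] by blast
  have gU: "g \<in> U" unfolding U_def using g(1) by blast
  have gmono: "\<And>x y. x \<le> y \<Longrightarrow> g x \<le> g y" using U_n_smono[OF g(1)] by (metis order_le_less)
  have xsN: "xs N = r" using xs_def h_def Npos by simp
  have \<delta>N: "\<delta> * N = \<epsilon> / 4" using \<delta>_def Npos by simp
  have bound: "\<bar>\<sigma> x - g x\<bar> \<le> \<epsilon> / 2" if xK: "x \<in> K" for x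
  proof -
    have xlr: "l \<le> x" "x \<le> r" using Klr xK by auto
    define S where "S = {i. i \<le> N \<and> xs i \<le> x}"
    have Sfin: "finite S" "S \<noteq> {}" using S_def xs_def xlr by auto
    define i where "i = Max S"
    have iS: "i \<le> N" "xs i \<le> x" using Max_in[OF Sfin] i_def S_def by auto
    have xs_in: "\<And>j. j \<le> N \<Longrightarrow> xs j \<in> {l..r}"
    proof -
      fix j assume "j \<le> N"
      have "real j * h \<le> real N * h" using hpos \<open>j \<le> N\<close> by simp
      then show "xs j \<in> {l..r}" using xsN hpos xs_def by auto
    qed
    show ?thesis
    proof (cases "i = N")
      case True
      then have "x = r" using iS xsN xlr by simp
      have "g r = ys N" using g(2) xsN by (metis order_refl)
      then have "\<sigma> x - g x = - \<delta> * N" using \<open>x = r\<close> xsN ys_def by simp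
      then show ?thesis using \<delta>N assms(4) by simp
    next
      case False
      then have iN: "Suc i \<le> N" using iS by simp
      have "Suc i \<notin> S" using Max_ge[OF Sfin(1)] i_def by fastforce
      then have x2: "x < xs (Suc i)" using S_def iN by auto
      have close: "\<sigma> (xs (Suc i)) - \<sigma> (xs i) < \<epsilon>/4"
      proof -
        have "dist (xs (Suc i)) (xs i) < d" using hd hpos xs_def by (simp add: dist_real_def algebra_simps)
        then have "dist (\<sigma> (xs (Suc i))) (\<sigma> (xs i)) < \<epsilon>/4" using d(2) xs_in iN iS(1) by blast
        then show ?thesis unfolding dist_real_def by linarith
      qed
      have s1: "\<sigma> (xs i) \<le> \<sigma> x" "\<sigma> x \<le> \<sigma> (xs (Suc i))"
        using assms(2) iS x2 by (auto simp: mono_def)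
      have g1: "ys i \<le> g x" "g x \<le> ys (Suc i)"
        using gmono[of "xs i" x] gmono[of x "xs (Suc i)"] iS x2 g(2) iN by auto
      have "\<delta> * real (Suc i) \<le> \<delta> * N" using \<delta>pos iN by simp
      moreover have "0 \<le> \<delta> * real i" using \<delta>pos by simp
      moreover have "ys i = \<sigma> (xs i) + \<delta> * real i" "ys (Suc i) = \<sigma> (xs (Suc i)) + \<delta> * real (Suc i)"
        using ys_def by simp_all
      ultimately have "\<sigma> x - g x \<le> \<epsilon>/2" "g x - \<sigma> x \<le> \<epsilon>/2"
        using s1 g1 close \<delta>N assms(4) by linarith+
      then show ?thesis unfolding abs_le_iff by (intro conjI) linarith+
    qed
  qed
  show ?thesis
  proof (intro bexI[OF _ gU] conjI impI)
    show "\<forall>x\<in>K. \<bar>\<sigma> x - g x\<bar> < \<epsilon>"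
    proof
      fix x assume "x \<in> K"
      then have "\<bar>\<sigma> x - g x\<bar> \<le> \<epsilon> / 2" by (rule bound)
      then show "\<bar>\<sigma> x - g x\<bar> < \<epsilon>" using assms(4) by linarith
    qed
  next
    assume "K \<noteq> {}"
    then have "(SUP x\<in>K. \<bar>\<sigma> x - g x\<bar>) \<le> \<epsilon> / 2"
      apply (rule cSUP_least)
      apply (erule bound)
      done
    then show "(SUP x\<in>K. \<bar>\<sigma> x - g x\<bar>) < \<epsilon>" using assms(4) by simp
  qed
qed

end
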